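(* Let $X$ be a finite $T_0$ topological space, $\mathcal V$ a multivector field on $X$ with $X$ invariant, and $\mathcal M=\{M_p\mid p\in\mathbb P\}$ a Morse predecomposition of $X$. Let $C\subset X$ be an isolated invariant set which is strongly connected in $G_{\mathcal V}$. If there is $r\in\mathbb P_C$ such that $M_r$ is saturated in $X$, then $C\subset M_r$; in particular $\mathbb P_C=\{r\}$.
   Context: Notation: $\operatorname{cl}$ is closure; $A\subset X$ is locally closed if $\operatorname{cl}A\setminus A$ is closed. A multivector field $\mathcal V$ on $X$ is a partition of $X$ into locally closed sets (multivectors); $[x]_{\mathcal V}$ is the multivector containing $x$. A multivector $V$ is critical if $H(\operatorname{cl}V,\operatorname{cl}V\setminus V)$ (relative singular homology) is nontrivial, regular otherwise. $A$ is $\mathcal V$-compatible if it is a union of multivectors; $\langle A\rangle_{\mathcal V}$ is the smallest locally closed $\mathcal V$-compatible set containing $A$. $\Pi_{\mathcal V}(x)=\operatorname{cl}\{x\}\cup[x]_{\mathcal V}$; $G_{\mathcal V}$ is the digraph on $X$ with an edge $x\to y$ iff $y\in\Pi_{\mathcal V}(x)$; a set $A$ is strongly connected in $G_{\mathcal V}$ if for all $v,w\in A$ there is a walk of positive length from $v$ to $w$ with all vertices in $A$. A solution is a partial map $\gamma:\mathbb Z\nrightarrow X$ with domain an integer interval and $\gamma(t+1)\in\Pi_{\mathcal V}(\gamma(t))$; a path has finite domain; a full solution has domain $\mathbb Z$. $\alpha(\gamma)=\langle\bigcap_{t\le0}\gamma((-\infty,t])\rangle_{\mathcal V}$, $\omega(\gamma)=\langle\bigcap_{t\ge0}\gamma([t,\infty))\rangle_{\mathcal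 V}$. A full solution is essential unless $\alpha(\gamma)$ or $\omega(\gamma)$ lies in a single regular multivector; an essential solution in $A$ has image in $A$. $\operatorname{Inv}S$ is the set of $x\in S$ with an essential solution $\gamma$ in $S$, $\gamma(0)=x$; $S$ is invariant if $\operatorname{Inv}S=S$. An invariant $S$ is isolated invariant if there is a closed $N\supset\Pi_{\mathcal V}(S)$ such that every path in $N$ with endpoints in $S$ has image in $S$. A link from $S_1$ to $S_2$ is a full solution with $\alpha(\gamma)\cap S_1\ne\emptyset\ne\omega(\gamma)\cap S_2$. A Morse predecomposition of $X$ is an indexed family $\{M_p\mid p\in\mathbb P\}$ of mutually disjoint isolated invariant subsets such that every essential solution in $X$ is a link from some $M_p$ to some $M_q$. $\mathbb P_C=\{p\in\mathbb P\mid M_p\cap C\ne\emptyset\}$. An invariant $T\subset X$ is saturated in $X$ if every essential solution $\gamma$ in $X$ with $\alpha(\gamma)\subset T$ and $\omega(\gamma)\subset T$ has $\operatorname{im}\gamma\subset T$. *)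

theory Defs
  imports "HOL-Analysis.Analysis" "HOL-Homology.Homology"
begin

definition locally_closed :: "'a topology \<Rightarrow> 'a set \<Rightarrow> bool" where
  "locally_closed T A \<longleftrightarrow> A \<subseteq> topspace T \<and> closedin T (T closure_of A - A)"

definition multivector_field :: "'a topology \<Rightarrow> 'a set set \<Rightarrow> bool" where
  "multivector_field T V \<longleftrightarrow>
     (\<forall>v\<in>V. v \<noteq> {} \<and> locally_closed T v) \<and>
     \<Union>V = topspace T \<and>
     (\<forall>v\<in>V. \<forall>w\<in>V. v \<noteq> w \<longrightarrow> v \<inter> w = {})"

definition mv :: "'a set set \<Rightarrow> 'a \<Rightarrow> 'a set" where
  "mv V x = (THE v. v \<in> V \<and> x \<in> v)"

definition critical :: "'a topology \<Rightarrow> 'a set \<Rightarrow> bool" where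
  "critical T v \<longleftrightarrow>
     (\<exists>p. \<not> trivial_group
            (relative_homology_group p (subtopology T (T closure_of v)) (T closure_of v - v)))"

definition regular :: "'a topology \<Rightarrow> 'a set \<Rightarrow> bool" where
  "regular T v \<longleftrightarrow> \<not> critical T v"

definition compatible :: "'a set set \<Rightarrow> 'a set \<Rightarrow> bool" where
  "compatible V A \<longleftrightarrow> (\<exists>W. W \<subseteq> V \<and> A = \<Union>W)"

definition lc_hull :: "'a topology \<Rightarrow> 'a set set \<Rightarrow> 'a set \<Rightarrow> 'a set" where
  "lc_hull T V A = \<Inter>{B. A \<subseteq> B \<and> locally_closed T B \<and> compatible V B}"

definition Pi_mv :: "'a topology \<Rightarrow> 'a set set \<Rightarrow> 'a \<Rightarrow> 'a set" where
  "Pi_mv T V x = T closure_of {x} \<union> mv V x"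

definition full_solution :: "'a topology \<Rightarrow> 'a set set \<Rightarrow> (int \<Rightarrow> 'a) \<Rightarrow> bool" where
  "full_solution T V \<gamma> \<longleftrightarrow>
     (\<forall>t. \<gamma> t \<in> topspace T \<and> \<gamma> (t + 1) \<in> Pi_mv T V (\<gamma> t))"

definition is_path :: "'a topology \<Rightarrow> 'a set set \<Rightarrow> int \<Rightarrow> int \<Rightarrow> (int \<Rightarrow> 'a) \<Rightarrow> bool" where
  "is_path T V a b \<gamma> \<longleftrightarrow> a \<le> b \<and>
     (\<forall>t\<in>{a..b}. \<gamma> t \<in> topspace T) \<and>
     (\<forall>t\<in>{a..<b}. \<gamma> (t + 1) \<in> Pi_mv T V (\<gamma> t))"

definition alpha_lim :: "'a topology \<Rightarrow> 'a set set \<Rightarrow> (int \<Rightarrow> 'a) \<Rightarrow> 'a set" where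
  "alpha_lim T V \<gamma> = lc_hull T V (\<Inter>t\<in>{..0}. \<gamma> ` {..t})"

definition omega_lim :: "'a topology \<Rightarrow> 'a set set \<Rightarrow> (int \<Rightarrow> 'a) \<Rightarrow> 'a set" where
  "omega_lim T V \<gamma> = lc_hull T V (\<Inter>t\<in>{0..}. \<gamma> ` {t..})"

definition essential :: "'a topology \<Rightarrow> 'a set set \<Rightarrow> (int \<Rightarrow> 'a) \<Rightarrow> bool" where
  "essential T V \<gamma> \<longleftrightarrow> full_solution T V \<gamma> \<and>
     \<not> (\<exists>v\<in>V. regular T v \<and> alpha_lim T V \<gamma> \<subseteq> v) \<and>
     \<not> (\<exists>v\<in>V. regular T v \<and> omega_lim T V \<gamma> \<subseteq> v)"

definition Inv :: "'a topology \<Rightarrow> 'a set set \<Rightarrow> 'a set \<Rightarrow> 'a set" where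
  "Inv T V S = {x\<in>S. \<exists>\<gamma>. essential T V \<gamma> \<and> range \<gamma> \<subseteq> S \<and> \<gamma> 0 = x}"

definition invariant :: "'a topology \<Rightarrow> 'a set set \<Rightarrow> 'a set \<Rightarrow> bool" where
  "invariant T V S \<longleftrightarrow> Inv T V S = S"

definition isolated_invariant :: "'a topology \<Rightarrow> 'a set set \<Rightarrow> 'a set \<Rightarrow> bool" where
  "isolated_invariant T V S \<longleftrightarrow> invariant T V S \<and>
     (\<exists>N. closedin T N \<and> (\<Union>x\<in>S. Pi_mv T V x) \<subseteq> N \<and>
          (\<forall>a b \<gamma>. is_path T V a b \<gamma> \<and> \<gamma> ` {a..b} \<subseteq> N \<and> \<gamma> a \<in> S \<and> \<gamma> b \<in> S
                \<longrightarrow> \<gamma> ` {a..b} \<subseteq> S))"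

text \<open>Strong connectedness of A in the digraph G_V (edge x \<rightarrow> y iff y \<in> Pi(x))\<close>
definition strongly_connected_G :: "'a topology \<Rightarrow> 'a set set \<Rightarrow> 'a set \<Rightarrow> bool" where
  "strongly_connected_G T V A \<longleftrightarrow>
     (\<forall>v\<in>A. \<forall>w\<in>A. \<exists>a b \<gamma>. a < b \<and> is_path T V a b \<gamma> \<and> \<gamma> a = v \<and> \<gamma> b = w \<and>
                            \<gamma> ` {a..b} \<subseteq> A)"

definition is_link :: "'a topology \<Rightarrow> 'a set set \<Rightarrow> 'a set \<Rightarrow> 'a set \<Rightarrow> (int \<Rightarrow> 'a) \<Rightarrow> bool" where
  "is_link T V S1 S2 \<gamma> \<longleftrightarrow> full_solution T V \<gamma> \<and>
     alpha_lim T V \<gamma> \<inter> S1 \<noteq> {} \<and> omega_lim T V \<gamma> \<inter> S2 \<noteq> {}"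

definition morse_predecomposition ::
    "'a topology \<Rightarrow> 'a set set \<Rightarrow> 'p set \<Rightarrow> ('p \<Rightarrow> 'a set) \<Rightarrow> bool" where
  "morse_predecomposition T V P M \<longleftrightarrow>
     (\<forall>p\<in>P. isolated_invariant T V (M p) \<and> M p \<subseteq> topspace T) \<and>
     (\<forall>p\<in>P. \<forall>q\<in>P. p \<noteq> q \<longrightarrow> M p \<inter> M q = {}) \<and>
     (\<forall>\<gamma>. essential T V \<gamma> \<and> range \<gamma> \<subseteq> topspace T \<longrightarrow>
          (\<exists>p\<in>P. \<exists>q\<in>P. is_link T V (M p) (M q) \<gamma>))"

definition P_of :: "'p set \<Rightarrow> ('p \<Rightarrow> 'a set) \<Rightarrow> 'a set \<Rightarrow> 'p set" where
  "P_of P M C = {p\<in>P. M p \<inter> C \<noteq> {}}"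

definition saturated :: "'a topology \<Rightarrow> 'a set set \<Rightarrow> 'a set \<Rightarrow> bool" where
  "saturated T V S \<longleftrightarrow> invariant T V S \<and> S \<subseteq> topspace T \<and>
     (\<forall>\<gamma>. essential T V \<gamma> \<and> range \<gamma> \<subseteq> topspace T \<and>
          alpha_lim T V \<gamma> \<subseteq> S \<and> omega_lim T V \<gamma> \<subseteq> S \<longrightarrow> range \<gamma> \<subseteq> S)"

end

theory Submission
  imports Defs
begin

lemma cl_pt:
  assumes "finite A" "z \<in> X closure_of A"
  shows "\<exists>a\<in>A. z \<in> X closure_of {a}"
proof -
  have "A = \<Union>((\<lambda>a. {a}) ` A)" by auto
  then have "X closure_of A = (\<Union>S\<in>(\<lambda>a. {a}) ` A. X closure_of S)"
    using closure_of_Union[of "(\<lambda>a. {a}) ` A" X] assms(1) by simp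
  then show ?thesis using assms(2) by auto
qed

lemma mv_props:
  assumes "multivector_field T V" "x \<in> topspace T"
  shows "mv V x \<in> V \<and> x \<in> mv V x"
proof -
  have U: "\<Union>V = topspace T" and D: "\<forall>v\<in>V. \<forall>w\<in>V. v \<noteq> w \<longrightarrow> v \<inter> w = {}"
    using assms(1) unfolding multivector_field_def by (rule conjunct1[OF conjunct2], rule conjunct2[OF conjunct2])
  have "x \<in> \<Union>V" using U assms(2) by simp
  then obtain v where v: "v \<in> V" "x \<in> v" by (rule UnionE)
  have uq: "\<And>w. w \<in> V \<and> x \<in> w \<Longrightarrow> w = v"
  proof -
    fix w assume w: "w \<in> V \<and> x \<in> w"
    show "w = v"
    proof (rule ccontr)
      assume "w \<noteq> v"
      then have "w \<inter> v = {}" using D w v(1) by blast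
      then show False using w v(2) by blast
    qed
  qed
  have "mv V x = v" unfolding mv_def using v uq by (intro the_equality) blast+
  then show ?thesis using v by simp
qed

lemma mv_eq:
  assumes "multivector_field T V" "x \<in> topspace T" "y \<in> mv V x"
  shows "mv V y = mv V x"
proof -
  have a: "mv V x \<in> V" "x \<in> mv V x" using mv_props[OF assms(1,2)] by auto
  have D: "\<forall>v\<in>V. \<forall>w\<in>V. v \<noteq> w \<longrightarrow> v \<inter> w = {}"
    using assms(1) unfolding multivector_field_def by (rule conjunct2[OF conjunct2])
  have uq: "\<And>w. w \<in> V \<and> y \<in> w \<Longrightarrow> w = mv V x"
  proof -
    fix w assume w: "w \<in> V \<and> y \<in> w"
    show "w = mv V x"
    proof (rule ccontr)
      assume "w \<noteq> mv V x"
      then have "w \<inter> mv V x = {}" using D w a(1) by blast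
      then show False using w assms(3) by blast
    qed
  qed
  have "(THE v. v \<in> V \<and> y \<in> v) = mv V x"
    by (rule the_equality) (use a assms(3) uq in blast)+
  then show ?thesis unfolding mv_def .
qed

lemma mv_sub:
  assumes "multivector_field T V" "x \<in> topspace T"
  shows "mv V x \<subseteq> topspace T"
proof -
  have "mv V x \<in> V" using mv_props[OF assms] by simp
  moreover have "\<forall>v\<in>V. v \<noteq> {} \<and> locally_closed T v" using assms(1) unfolding multivector_field_def by (rule conjunct1)
  ultimately have "locally_closed T (mv V x)" by simp
  then show ?thesis unfolding locally_closed_def by (rule conjunct1)
qed

lemma iso_compatible:
  assumes mvf: "multivector_field T V" and iso: "isolated_invariant T V S" and sub: "S \<subseteq> topspace T"
  shows "compatible V S"
proof -
  obtain N where N: "closedin T N" "(\<Union>x\<in>S. Pi_mv T V x) \<subseteq> N"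
    "\<And>a b \<gamma>. is_path T V a b \<gamma> \<and> \<gamma> ` {a..b} \<subseteq> N \<and> \<gamma> a \<in> S \<and> \<gamma> b \<in> S
                \<Longrightarrow> \<gamma> ` {a..b} \<subseteq> S"
    using iso unfolding isolated_invariant_def by blast
  have key: "mv V x \<subseteq> S" if x: "x \<in> S" for x
  proof
    fix y assume y: "y \<in> mv V x"
    have xt: "x \<in> topspace T" using x sub by auto
    have yt: "y \<in> topspace T" using mv_sub[OF mvf xt] y by auto
    have eq: "mv V y = mv V x" using mv_eq[OF mvf xt y] .
    have xx: "x \<in> mv V x" using mv_props[OF mvf xt] by auto
    define g where "g = (\<lambda>t::int. if t = 1 then y else x)"
    have p: "is_path T V 0 2 g"
      unfolding is_path_def Pi_mv_def g_def using xt yt y eq xx by auto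
    have "Pi_mv T V x \<subseteq> N" using N(2) x by auto
    then have "g ` {0..2} \<subseteq> N" unfolding g_def Pi_mv_def using y xx by auto
    then have "g ` {0..2} \<subseteq> S" using N(3)[of 0 2 g] p x unfolding g_def by auto
    moreover have "y = g 1" unfolding g_def by simp
    ultimately show "y \<in> S" by auto
  qed
  have "S = \<Union>{v\<in>V. v \<subseteq> S}"
  proof
    show "S \<subseteq> \<Union>{v\<in>V. v \<subseteq> S}"
    proof
      fix x assume x: "x \<in> S"
      then have "mv V x \<in> V" "x \<in> mv V x" using mv_props[OF mvf] sub by auto
      then show "x \<in> \<Union>{v\<in>V. v \<subseteq> S}" using key[OF x] by auto
    qed
  qed auto
  then show ?thesis unfolding compatible_def by (intro exI[of _ "{v\<in>V. v \<subseteq> S}"]) auto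
qed

lemma iso_lc:
  assumes fin: "finite (topspace T)" and iso: "isolated_invariant T V S" and sub: "S \<subseteq> topspace T"
  shows "locally_closed T S"
proof -
  obtain N where N: "closedin T N" "(\<Union>x\<in>S. Pi_mv T V x) \<subseteq> N"
    "\<And>a b \<gamma>. is_path T V a b \<gamma> \<and> \<gamma> ` {a..b} \<subseteq> N \<and> \<gamma> a \<in> S \<and> \<gamma> b \<in> S
                \<Longrightarrow> \<gamma> ` {a..b} \<subseteq> S"
    using iso unfolding isolated_invariant_def by blast
  let ?D = "T closure_of S - S"
  have Dt: "?D \<subseteq> topspace T" using closure_of_subset_topspace[of T S] by blast
  have "T closure_of ?D \<subseteq> ?D"
  proof
    fix z assume z: "z \<in> T closure_of ?D"
    have zc: "z \<in> T closure_of S"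
      using z closure_of_mono[of ?D "T closure_of S" T] closure_of_closure_of[of T S] by (metis Diff_subset subsetD)
    have zt: "z \<in> topspace T" using z closure_of_subset_topspace[of T ?D] by blast
    show "z \<in> ?D"
    proof (rule ccontr)
      assume "z \<notin> ?D"
      then have zS: "z \<in> S" using zc by auto
      have finD: "finite ?D" using fin Dt finite_subset by blast
      obtain w where w: "w \<in> ?D" "z \<in> T closure_of {w}" using cl_pt[OF finD z] by auto
      have finS: "finite S" using fin sub finite_subset by blast
      obtain s where s: "s \<in> S" "w \<in> T closure_of {s}" using cl_pt[OF finS] w(1) by auto
      have st: "s \<in> topspace T" using s sub by auto
      have wt: "w \<in> topspace T" using w Dt by auto
      define g where "g = (\<lambda>t::int. if t = 0 then s else if t = 1 then w else z)"
      have p: "is_path T V 0 2 g"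
        unfolding is_path_def Pi_mv_def g_def using st wt zt s w by auto
      have PiN: "Pi_mv T V s \<subseteq> N" using N(2) s by auto
      have sN: "s \<in> N" using PiN closure_of_subset[of "{s}" T] st unfolding Pi_mv_def by auto
      have wN: "w \<in> N" using PiN s unfolding Pi_mv_def by auto
      have zN: "z \<in> N" using closure_of_minimal[of "{w}" N T] wN N(1) w by auto
      have "g ` {0..2} \<subseteq> N" unfolding g_def using sN wN zN by auto
      then have "g ` {0..2} \<subseteq> S" using N(3)[of 0 2 g] p s zS unfolding g_def by auto
      moreover have "w = g 1" unfolding g_def by simp
      ultimately have "w \<in> S" by auto
      then show False using w by auto
    qed
  qed
  then have "closedin T ?D" using closure_of_subset_eq Dt by blast
  then show ?thesis unfolding locally_closed_def using sub by blast
qed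

lemma hull_sub:
  assumes "A \<subseteq> S" "locally_closed T S" "compatible V S"
  shows "lc_hull T V A \<subseteq> S"
  unfolding lc_hull_def by (rule Inter_lower) (simp add: assms)


lemma om_char:
  fixes f :: "int \<Rightarrow> 'a"
  shows "z \<in> (\<Inter>t\<in>{0..}. f ` {t..}) \<longleftrightarrow> (\<forall>t. \<exists>s\<ge>t. f s = z)"
proof
  assume a: "z \<in> (\<Inter>t\<in>{0..}. f ` {t..})"
  show "\<forall>t. \<exists>s\<ge>t. f s = z"
  proof
    fix t :: int
    have "z \<in> f ` {max t 0..}" using a by auto
    then show "\<exists>s\<ge>t. f s = z" by force
  qed
next
  assume "\<forall>t. \<exists>s\<ge>t. f s = z"
  then show "z \<in> (\<Inter>t\<in>{0..}. f ` {t..})" by fastforce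
qed

lemma om_shift:
  fixes f g :: "int \<Rightarrow> 'a"
  assumes K: "K \<ge> 0" and eq: "\<And>s. s \<ge> K \<Longrightarrow> g s = f (s - K)"
  shows "(\<Inter>t\<in>{0..}. g ` {t..}) = (\<Inter>t\<in>{0..}. f ` {t..})"
proof -
  have E: "(\<forall>t. \<exists>s\<ge>t. g s = z) \<longleftrightarrow> (\<forall>t. \<exists>s\<ge>t. f s = z)" for z
  proof
    assume a: "\<forall>t. \<exists>s\<ge>t. g s = z"
    show "\<forall>t. \<exists>s\<ge>t. f s = z"
    proof
      fix t
      obtain s where s: "s \<ge> max t 0 + K" "g s = z" using a by blast
      then have "f (s - K) = z" using eq[of s] K by simp
      moreover have "s - K \<ge> t" using s by simp
      ultimately show "\<exists>s\<ge>t. f s = z" by blast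
    qed
  next
    assume a: "\<forall>t. \<exists>s\<ge>t. f s = z"
    show "\<forall>t. \<exists>s\<ge>t. g s = z"
    proof
      fix t
      obtain s where s: "s \<ge> max t 0" "f s = z" using a by blast
      have "g (s + K) = z" using eq[of "s + K"] s K by simp
      then show "\<exists>s\<ge>t. g s = z" using s K by (intro exI[of _ "s + K"]) simp
    qed
  qed
  show ?thesis
    unfolding set_eq_iff om_char by (intro allI, rule E)
qed

lemma path_norm:
  assumes "a < b" "is_path T V a b p"
  shows "\<forall>t\<in>{0..b-a}. p (t + a) \<in> topspace T"
    "\<forall>t\<in>{0..<b-a}. p (t + 1 + a) \<in> Pi_mv T V (p (t + a))"
proof -
  show "\<forall>t\<in>{0..b-a}. p (t + a) \<in> topspace T"
  proof
    fix t assume "t \<in> {0..b-a}"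
    then have "t + a \<in> {a..b}" by auto
    then show "p (t + a) \<in> topspace T" using assms(2) unfolding is_path_def by blast
  qed
  show "\<forall>t\<in>{0..<b-a}. p (t + 1 + a) \<in> Pi_mv T V (p (t + a))"
  proof
    fix t assume "t \<in> {0..<b-a}"
    then have "t + a \<in> {a..<b}" by auto
    then have "p (t + a + 1) \<in> Pi_mv T V (p (t + a))" using assms(2) unfolding is_path_def by blast
    then show "p (t + 1 + a) \<in> Pi_mv T V (p (t + a))" by (simp add: add.commute add.left_commute)
  qed
qed

theorem lemma4p10:
  fixes T :: "'a topology" and V :: "'a set set"
    and P :: "'p set" and M :: "'p \<Rightarrow> 'a set" and C :: "'a set" and r :: 'p
  assumes "finite (topspace T)"
    and "t0_space T"
    and "multivector_field T V"
    and "invariant T V (topspace T)"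
    and "morse_predecomposition T V P M"
    and "isolated_invariant T V C"
    and "C \<subseteq> topspace T"
    and "strongly_connected_G T V C"
    and "r \<in> P_of P M C"
    and "saturated T V (M r)"
  shows "C \<subseteq> M r \<and> P_of P M C = {r}"
proof -
  have rP: "r \<in> P" and "M r \<inter> C \<noteq> {}" using assms(9) unfolding P_of_def by auto
  then obtain x where xM: "x \<in> M r" and xC: "x \<in> C" by blast
  have MP1: "\<forall>p\<in>P. isolated_invariant T V (M p) \<and> M p \<subseteq> topspace T"
    using assms(5) unfolding morse_predecomposition_def by (rule conjunct1)
  have MP2: "\<forall>p\<in>P. \<forall>q\<in>P. p \<noteq> q \<longrightarrow> M p \<inter> M q = {}"
    using assms(5) unfolding morse_predecomposition_def by (rule conjunct1[OF conjunct2])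
  have isoM: "isolated_invariant T V (M r)" and Msub: "M r \<subseteq> topspace T"
    using bspec[OF MP1 rP] by auto
  have lcM: "locally_closed T (M r)" using iso_lc[OF assms(1) isoM Msub] .
  have cpM: "compatible V (M r)" using iso_compatible[OF assms(3) isoM Msub] .
  have invM: "Inv T V (M r) = M r" using assms(10) unfolding saturated_def invariant_def by (rule conjunct1)
  obtain \<phi> where ph: "essential T V \<phi>" "range \<phi> \<subseteq> M r" "\<phi> 0 = x"
    using xM invM unfolding Inv_def by blast
  have phfs: "full_solution T V \<phi>" using ph(1) unfolding essential_def by blast
  have CM: "C \<subseteq> M r"
  proof
    fix y assume yC: "y \<in> C"
    obtain a1 b1 p1 where P1: "a1 < b1" "is_path T V a1 b1 p1" "p1 a1 = x" "p1 b1 = y"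
      using assms(8) xC yC unfolding strongly_connected_G_def by blast
    obtain a2 b2 p2 where P2: "a2 < b2" "is_path T V a2 b2 p2" "p2 a2 = y" "p2 b2 = x"
      using assms(8) xC yC unfolding strongly_connected_G_def by blast
    define n1 where "n1 = b1 - a1"
    define n2 where "n2 = b2 - a2"
    define q1 where "q1 = (\<lambda>t. p1 (t + a1))"
    define q2 where "q2 = (\<lambda>t. p2 (t + a2))"
    have n1: "n1 > 0" and n2: "n2 > 0" using P1 P2 n1_def n2_def by auto
    have q1t: "\<forall>t\<in>{0..n1}. q1 t \<in> topspace T" and
         q1s: "\<forall>t\<in>{0..<n1}. q1 (t + 1) \<in> Pi_mv T V (q1 t)"
      using path_norm[OF P1(1,2)] unfolding q1_def n1_def by auto
    have q2t: "\<forall>t\<in>{0..n2}. q2 t \<in> topspace T" and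
         q2s: "\<forall>t\<in>{0..<n2}. q2 (t + 1) \<in> Pi_mv T V (q2 t)"
      using path_norm[OF P2(1,2)] unfolding q2_def n2_def by auto
    have q10: "q1 0 = x" and q1n: "q1 n1 = y" and q20: "q2 0 = y" and q2n: "q2 n2 = x"
      using P1 P2 unfolding q1_def q2_def n1_def n2_def by auto
    define g where "g = (\<lambda>t. if t \<le> 0 then \<phi> t else if t \<le> n1 then q1 t
                         else if t \<le> n1 + n2 then q2 (t - n1) else \<phi> (t - n1 - n2))"
    have gfs: "full_solution T V g"
      unfolding full_solution_def
    proof
      fix t :: int
      have pt: "\<phi> s \<in> topspace T" for s using phfs unfolding full_solution_def by blast
      have ps: "\<phi> (s + 1) \<in> Pi_mv T V (\<phi> s)" for s using phfs unfolding full_solution_def by blast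
      have A: "g t \<in> topspace T"
        unfolding g_def using pt q1t q2t by auto
      have B: "g (t + 1) \<in> Pi_mv T V (g t)"
      proof -
        consider "t < 0" | "t = 0" | "0 < t \<and> t < n1" | "t = n1" | "n1 < t \<and> t < n1 + n2"
          | "t = n1 + n2" | "t > n1 + n2" by linarith
        then show ?thesis
        proof cases
          case 1 then show ?thesis unfolding g_def using ps[of t] by simp
        next
          case 2
          have "q1 (0 + 1) \<in> Pi_mv T V (q1 0)" using bspec[OF q1s, of 0] n1 by simp
          then show ?thesis unfolding g_def using 2 n1 ph(3) q10 by simp
        next
          case 3 then show ?thesis unfolding g_def using q1s by simp
        next
          case 4
          have "q2 (0 + 1) \<in> Pi_mv T V (q2 0)" using bspec[OF q2s, of 0] n2 by simp
          then show ?thesis unfolding g_def using 4 n1 n2 q1n q20 by simp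
        next
          case 5
          then have "t - n1 \<in> {0..<n2}" by auto
          then have "q2 (t - n1 + 1) \<in> Pi_mv T V (q2 (t - n1))" using q2s by blast
          moreover have "g (t + 1) = q2 (t - n1 + 1)" unfolding g_def using 5 n1
            by (auto simp: algebra_simps)
          moreover have "g t = q2 (t - n1)" unfolding g_def using 5 n1 by auto
          ultimately show ?thesis by simp
        next
          case 6 then show ?thesis unfolding g_def using ps[of 0] n1 n2 q2n ph(3) by simp
        next
          case 7
          have "\<phi> (t - n1 - n2 + 1) \<in> Pi_mv T V (\<phi> (t - n1 - n2))" using ps by blast
          moreover have "g (t + 1) = \<phi> (t - n1 - n2 + 1)" unfolding g_def using 7 n1 n2
            by (auto simp: algebra_simps)
          moreover have "g t = \<phi> (t - n1 - n2)" unfolding g_def using 7 n1 n2 by auto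
          ultimately show ?thesis by simp
        qed
      qed
      show "g t \<in> topspace T \<and> g (t + 1) \<in> Pi_mv T V (g t)" using A B by blast
    qed
    have aeq: "(\<Inter>t\<in>{..0}. g ` {..t}) = (\<Inter>t\<in>{..0}. \<phi> ` {..t})"
    proof (rule INF_cong)
      fix t :: int assume "t \<in> {..0}"
      then show "g ` {..t} = \<phi> ` {..t}" unfolding g_def by (intro image_cong) auto
    qed simp
    have oeq: "(\<Inter>t\<in>{0..}. g ` {t..}) = (\<Inter>t\<in>{0..}. \<phi> ` {t..})"
      by (rule om_shift[of "n1 + n2"]) (use n1 n2 q2n ph(3) in \<open>auto simp: g_def diff_diff_eq\<close>)
    have al: "alpha_lim T V g = alpha_lim T V \<phi>" unfolding alpha_lim_def using aeq by simp
    have ol: "omega_lim T V g = omega_lim T V \<phi>" unfolding omega_lim_def using oeq by simp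
    have gess: "essential T V g" using ph(1) gfs al ol unfolding essential_def by simp
    have "alpha_lim T V \<phi> \<subseteq> M r" unfolding alpha_lim_def
      by (rule hull_sub[OF _ lcM cpM]) (use ph(2) in blast)
    moreover have "omega_lim T V \<phi> \<subseteq> M r" unfolding omega_lim_def
      by (rule hull_sub[OF _ lcM cpM]) (use ph(2) in blast)
    moreover have "range g \<subseteq> topspace T" using gfs unfolding full_solution_def by blast
    ultimately have "range g \<subseteq> M r" using assms(10) gess al ol unfolding saturated_def by simp
    moreover have "g n1 = y" unfolding g_def using n1 q1n by simp
    ultimately show "y \<in> M r" by blast
  qed
  have "P_of P M C = {r}"
  proof
    show "P_of P M C \<subseteq> {r}"
    proof
      fix p assume "p \<in> P_of P M C"
      then have pP: "p \<in> P" and "M p \<inter> C \<noteq> {}" unfolding P_of_def by auto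
      then have "M p \<inter> M r \<noteq> {}" using CM by blast
      then show "p \<in> {r}" using MP2 pP rP by blast
    qed
  qed (use assms(9) in simp)
  then show ?thesis using CM by simp
qed

end
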